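(* For every $n\ge1$, $\lambda^{(0)}_{2n-1}\equiv0$, and $$\lambda^{(0)}_{2n}(t,c)=\frac{p_{2n}(\lambda_0,c)}{(4\lambda_0^3-c)^{5n-1}}$$ for some polynomial $p_{2n}\in\mathbb C[\lambda_0,c]$ whose degree in $\lambda_0$ is at most $9n-2$.
   Context: Let $\eta$ be a large parameter and $c\in\mathbb C$. The Hamiltonian system $(H_{\rm II})$: $\frac{d\lambda}{dt}=\eta\nu$, $\frac{d\nu}{dt}=\eta(2\lambda^3+t\lambda+c)$. Let $\lambda_0(t,c)$ be a branch of the algebraic function defined by $2\lambda_0^3+t\lambda_0+c=0$ (so $6\lambda_0^2+t=(4\lambda_0^3-c)/\lambda_0$). The 0-parameter solution is the unique pair of formal power series $\lambda^{(0)}=\sum_{k\ge0}\eta^{-k}\lambda^{(0)}_k(t,c)$, $\nu^{(0)}=\sum_{k\ge0}\eta^{-k}\nu^{(0)}_k(t,c)$ solving $(H_{\rm II})$ formally with $\lambda^{(0)}_0=\lambda_0$, $\nu^{(0)}_0=0$; equivalently $(6\lambda_0^2+t)\lambda^{(0)}_k+2\sum_{k_1+k_2+k_3=k,\,0\le k_j<k}\lambda^{(0)}_{k_1}\lambda^{(0)}_{k_2}\lambda^{(0)}_{k_3}=\frac{d^2\lambda^{(0)}_{k-2}}{dt^2}$ for $k\ge1$ (with $\lambda^{(0)}_{-1}=0$). *)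

theory Defs
  imports "HOL-Analysis.Analysis" "HOL-Computational_Algebra.Polynomial"
begin

text \<open>Given the list L = [lambda_0, ..., lambda_(k-1)] (as functions of t), compute lambda_k
  from the recursion
  (6 lambda_0^2 + t) lambda_k + 2 * sum_{k1+k2+k3=k, 0<=kj<k} lambda_k1 lambda_k2 lambda_k3
     = d^2/dt^2 lambda_(k-2)   (with lambda_(-1) = 0).\<close>
definition zs_step :: "(complex \<Rightarrow> complex) list \<Rightarrow> complex \<Rightarrow> complex" where
  "zs_step L = (let k = length L in
     (\<lambda>t. ((if 2 \<le> k then deriv (deriv (L ! (k - 2))) t else 0)
           - 2 * (\<Sum>k1\<le>k. \<Sum>k2\<le>k - k1.
                    if k1 < k \<and> k2 < k \<and> k - k1 - k2 < k
                    then (L ! k1) t * (L ! k2) t * (L ! (k - k1 - k2)) t else 0))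
          / (6 * (L ! 0) t ^ 2 + t)))"

primrec zs_list :: "(complex \<Rightarrow> complex) \<Rightarrow> nat \<Rightarrow> (complex \<Rightarrow> complex) list" where
  "zs_list l0 0 = [l0]"
| "zs_list l0 (Suc k) = zs_list l0 k @ [zs_step (zs_list l0 k)]"

definition zero_param_coeff :: "(complex \<Rightarrow> complex) \<Rightarrow> nat \<Rightarrow> complex \<Rightarrow> complex" where
  "zero_param_coeff l0 k = zs_list l0 k ! k"

definition is_branch :: "complex \<Rightarrow> complex set \<Rightarrow> (complex \<Rightarrow> complex) \<Rightarrow> bool" where
  "is_branch c U l0 \<longleftrightarrow> open U \<and> l0 holomorphic_on U \<and>
     (\<forall>t\<in>U. 2 * l0 t ^ 3 + t * l0 t + c = 0 \<and> 4 * l0 t ^ 3 - c \<noteq> 0)"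

text \<open>Evaluation of a bivariate polynomial p in C[lambda0, c], represented as a polynomial in
  lambda0 whose coefficients are polynomials in c.\<close>
definition eval2 :: "complex poly poly \<Rightarrow> complex \<Rightarrow> complex \<Rightarrow> complex" where
  "eval2 p x c = poly (map_poly (\<lambda>q. poly q c) p) x"

end

theory Submission
  imports Defs
begin


lemma eval2_0[simp]: "eval2 0 x c = 0" by (simp add: eval2_def)
lemma eval2_pCons[simp]: "eval2 (pCons a p) x c = poly a c + x * eval2 p x c"
  by (simp add: eval2_def map_poly_pCons)
lemma map_poly_eval_add: "map_poly (\<lambda>q. poly q c) (p + q) = map_poly (\<lambda>q. poly q c) p + map_poly (\<lambda>q. poly q c) q"
  by (intro poly_eqI) (simp add: coeff_map_poly)
lemma eval2_add[simp]: "eval2 (p + q) x c = eval2 p x c + eval2 q x c"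
  by (simp add: eval2_def map_poly_eval_add)
lemma eval2_smult[simp]: "eval2 (smult a p) x c = poly a c * eval2 p x c"
  by (simp add: eval2_def map_poly_smult)
lemma eval2_mult[simp]: "eval2 (p * q) x c = eval2 p x c * eval2 q x c"
  by (induction p) (simp_all add: algebra_simps)
lemma eval2_uminus[simp]: "eval2 (- p) x c = - eval2 p x c"
  by (induction p) (simp_all add: algebra_simps)
lemma eval2_diff[simp]: "eval2 (p - q) x c = eval2 p x c - eval2 q x c"
  using eval2_add[of p "-q"] by simp
lemma eval2_1[simp]: "eval2 1 x c = 1" by (simp add: eval2_def)
lemma eval2_power[simp]: "eval2 (p ^ n) x c = eval2 p x c ^ n"
  by (induction n) simp_all

lemma eval2_DERIV: "((\<lambda>x. eval2 p x c) has_field_derivative eval2 (pderiv p) x c) (at x)"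
proof (induction p)
  case 0 then show ?case by simp
next
  case (pCons a p)
  have h: "((\<lambda>x. x * eval2 p x c) has_field_derivative
          (x * eval2 (pderiv p) x c + 1 * eval2 p x c)) (at x)"
    by (rule DERIV_mult'[OF DERIV_ident pCons.IH])
  have "((\<lambda>x. poly a c + x * eval2 p x c) has_field_derivative
          (0 + (x * eval2 (pderiv p) x c + 1 * eval2 p x c))) (at x)"
    by (rule DERIV_add[OF DERIV_const h])
  then show ?case by (simp add: pderiv_pCons algebra_simps)
qed




lemma branch_facts:
  assumes b: "is_branch c U l0" and t: "t \<in> U"
  shows "l0 t \<noteq> 0" "4*l0 t^3 - c \<noteq> 0" "(6*l0 t^2 + t) * l0 t = 4*l0 t^3 - c"
    "(l0 has_field_derivative (- (l0 t ^ 2) / (4 * l0 t ^ 3 - c))) (at t)"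
proof -
  have U: "open U" and hol: "l0 holomorphic_on U"
    and eq: "\<And>s. s \<in> U \<Longrightarrow> 2 * l0 s ^ 3 + s * l0 s + c = 0"
    and D: "\<And>s. s \<in> U \<Longrightarrow> 4 * l0 s ^ 3 - c \<noteq> 0"
    using b unfolding is_branch_def by auto
  show D0: "4*l0 t^3 - c \<noteq> 0" using D t by auto
  show nz: "l0 t \<noteq> 0"
  proof
    assume "l0 t = 0" then have "c = 0" using eq[OF t] by simp
    with \<open>l0 t = 0\<close> D0 show False by simp
  qed
  show id: "(6*l0 t^2 + t) * l0 t = 4*l0 t^3 - c"
    using eq[OF t] by (simp add: algebra_simps power2_eq_square power3_eq_cube)
  define l' where "l' = deriv l0 t"
  have hl: "(l0 has_field_derivative l') (at t)"
    unfolding l'_def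
    by (rule field_differentiable_derivI[OF holomorphic_on_imp_differentiable_at[OF hol U t]])
  have hg: "((\<lambda>s. 2 * l0 s ^ 3 + s * l0 s + c) has_field_derivative
           (6 * l0 t ^ 2 * l' + (l0 t + t * l'))) (at t)"
    by (rule derivative_eq_intros hl refl | simp)+
  have h0: "((\<lambda>s. 2 * l0 s ^ 3 + s * l0 s + c) has_field_derivative 0) (at t)"
    by (rule has_field_derivative_transform_within_open[OF DERIV_const U t]) (simp add: eq)
  have "6 * l0 t ^ 2 * l' + (l0 t + t * l') = 0" using DERIV_unique[OF hg h0] .
  then have "(6*l0 t^2 + t) * l' = - l0 t" by (simp add: algebra_simps add_eq_0_iff)
  then have "(6*l0 t^2 + t) * l' * l0 t = - l0 t * l0 t" by simp
  then have "(6*l0 t^2 + t) * l0 t * l' = - (l0 t ^ 2)" by (simp add: power2_eq_square ac_simps)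
  then have "(4*l0 t^3 - c) * l' = - (l0 t ^ 2)" unfolding id .
  then have "l' = - (l0 t ^ 2) / (4 * l0 t ^ 3 - c)" using D0 by (simp add: field_simps)
  then show "(l0 has_field_derivative (- (l0 t ^ 2) / (4 * l0 t ^ 3 - c))) (at t)" using hl by simp
qed




definition Rep :: "(complex \<Rightarrow> complex set \<Rightarrow> (complex \<Rightarrow> complex) \<Rightarrow> complex \<Rightarrow> complex) \<Rightarrow> nat \<Rightarrow> nat \<Rightarrow> bool" where
  "Rep F d a \<longleftrightarrow> (\<exists>p :: complex poly poly. degree p \<le> d \<and>
     (\<forall>c U l0. is_branch c U l0 \<longrightarrow> (\<forall>t\<in>U. F c U l0 t = eval2 p (l0 t) c / (4 * l0 t ^ 3 - c) ^ a)))"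

definition Xp :: "complex poly poly" where "Xp = [:0, 1:]"
definition Dp :: "complex poly poly" where "Dp = [: [:0, -1:], 0, 0, [:4:] :]"

lemma eval2_Xp[simp]: "eval2 Xp x c = x" by (simp add: Xp_def)
lemma eval2_Dp[simp]: "eval2 Dp x c = 4 * x ^ 3 - c" by (simp add: Dp_def power3_eq_cube algebra_simps)
lemma eval2_const[simp]: "eval2 [:a:] x c = poly a c" by simp
lemma degree_Xp: "degree Xp = 1" by (simp add: Xp_def)
lemma degree_Dp: "degree Dp \<le> 3" by (simp add: Dp_def)

lemma Rep_zero:
  assumes "\<And>c U l0 t. is_branch c U l0 \<Longrightarrow> t \<in> U \<Longrightarrow> F c U l0 t = 0"
  shows "Rep F d a"
  unfolding Rep_def by (rule exI[of _ 0]) (simp add: assms)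

lemma Rep_cong:
  assumes "Rep F d a" "\<And>c U l0 t. is_branch c U l0 \<Longrightarrow> t \<in> U \<Longrightarrow> G c U l0 t = F c U l0 t"
  shows "Rep G d a"
  using assms unfolding Rep_def by metis

lemma Rep_add:
  assumes "Rep F d a" "Rep G d a"
  shows "Rep (\<lambda>c U l0 t. F c U l0 t + G c U l0 t) d a"
proof -
  obtain p where p: "degree p \<le> d" "\<forall>c U l0. is_branch c U l0 \<longrightarrow> (\<forall>t\<in>U. F c U l0 t = eval2 p (l0 t) c / (4 * l0 t ^ 3 - c) ^ a)"
    using assms(1) unfolding Rep_def by blast
  obtain q where q: "degree q \<le> d" "\<forall>c U l0. is_branch c U l0 \<longrightarrow> (\<forall>t\<in>U. G c U l0 t = eval2 q (l0 t) c / (4 * l0 t ^ 3 - c) ^ a)"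
    using assms(2) unfolding Rep_def by blast
  show ?thesis unfolding Rep_def
    by (rule exI[of _ "p + q"]) (use p q degree_add_le in \<open>auto simp: add_divide_distrib\<close>)
qed

lemma Rep_diff:
  assumes "Rep F d a" "Rep G d a"
  shows "Rep (\<lambda>c U l0 t. F c U l0 t - G c U l0 t) d a"
proof -
  obtain p where p: "degree p \<le> d" "\<forall>c U l0. is_branch c U l0 \<longrightarrow> (\<forall>t\<in>U. F c U l0 t = eval2 p (l0 t) c / (4 * l0 t ^ 3 - c) ^ a)"
    using assms(1) unfolding Rep_def by blast
  obtain q where q: "degree q \<le> d" "\<forall>c U l0. is_branch c U l0 \<longrightarrow> (\<forall>t\<in>U. G c U l0 t = eval2 q (l0 t) c / (4 * l0 t ^ 3 - c) ^ a)"
    using assms(2) unfolding Rep_def by blast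
  have "degree (p - q) \<le> d" using p q degree_diff_le by blast
  then show ?thesis unfolding Rep_def
    by (intro exI[of _ "p - q"]) (use p q in \<open>auto simp: diff_divide_distrib\<close>)
qed

lemma Rep_cmult:
  assumes "Rep F d a"
  shows "Rep (\<lambda>c U l0 t. k * F c U l0 t) d a"
proof -
  obtain p where p: "degree p \<le> d" "\<forall>c U l0. is_branch c U l0 \<longrightarrow> (\<forall>t\<in>U. F c U l0 t = eval2 p (l0 t) c / (4 * l0 t ^ 3 - c) ^ a)"
    using assms(1) unfolding Rep_def by blast
  show ?thesis unfolding Rep_def
    by (rule exI[of _ "smult [:k:] p"]) (use p in auto)
qed

lemma Rep_mult:
  assumes "Rep F d1 a1" "Rep G d2 a2"
  shows "Rep (\<lambda>c U l0 t. F c U l0 t * G c U l0 t) (d1 + d2) (a1 + a2)"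
proof -
  obtain p where p: "degree p \<le> d1" "\<forall>c U l0. is_branch c U l0 \<longrightarrow> (\<forall>t\<in>U. F c U l0 t = eval2 p (l0 t) c / (4 * l0 t ^ 3 - c) ^ a1)"
    using assms(1) unfolding Rep_def by blast
  obtain q where q: "degree q \<le> d2" "\<forall>c U l0. is_branch c U l0 \<longrightarrow> (\<forall>t\<in>U. G c U l0 t = eval2 q (l0 t) c / (4 * l0 t ^ 3 - c) ^ a2)"
    using assms(2) unfolding Rep_def by blast
  have "degree (p * q) \<le> d1 + d2" using p q degree_mult_le[of p q] by linarith
  then show ?thesis unfolding Rep_def
    by (intro exI[of _ "p * q"]) (use p q in \<open>auto simp: power_add\<close>)
qed

lemma Rep_mono:
  assumes "Rep F d a" "a \<le> a'" "d + 3 * (a' - a) \<le> d'"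
  shows "Rep F d' a'"
proof -
  obtain p where p: "degree p \<le> d" "\<forall>c U l0. is_branch c U l0 \<longrightarrow> (\<forall>t\<in>U. F c U l0 t = eval2 p (l0 t) c / (4 * l0 t ^ 3 - c) ^ a)"
    using assms(1) unfolding Rep_def by blast
  have "degree (p * Dp ^ (a' - a)) \<le> degree p + degree (Dp ^ (a' - a))" by (rule degree_mult_le)
  also have "degree (Dp ^ (a' - a)) \<le> 3 * (a' - a)"
    using degree_power_le[of Dp "a' - a"] degree_Dp
    by (meson le_trans mult_le_mono1)
  finally have deg: "degree (p * Dp ^ (a' - a)) \<le> d'" using p assms(3) by linarith
  have a': "a' = a + (a' - a)" using assms(2) by simp
  show ?thesis unfolding Rep_def
  proof (intro exI[of _ "p * Dp ^ (a' - a)"] conjI deg allI impI ballI)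
    fix c U l0 t assume b: "is_branch c U l0" and t: "t \<in> U"
    have D0: "4*l0 t^3 - c \<noteq> 0" using branch_facts(2)[OF b t] .
    have "F c U l0 t = eval2 p (l0 t) c / (4 * l0 t ^ 3 - c) ^ a" using p b t by blast
    also have "\<dots> = eval2 p (l0 t) c * (4 * l0 t ^ 3 - c) ^ (a' - a) / (4 * l0 t ^ 3 - c) ^ (a + (a' - a))"
      using D0 by (simp add: power_add)
    also have "\<dots> = eval2 (p * Dp ^ (a' - a)) (l0 t) c / (4 * l0 t ^ 3 - c) ^ a'"
      using a' by simp
    finally show "F c U l0 t = eval2 (p * Dp ^ (a' - a)) (l0 t) c / (4 * l0 t ^ 3 - c) ^ a'" .
  qed
qed

lemma Rep_sum:
  assumes "finite I" "\<And>i. i \<in> I \<Longrightarrow> Rep (F i) d a"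
  shows "Rep (\<lambda>c U l0 t. \<Sum>i\<in>I. F i c U l0 t) d a"
  using assms
proof (induction I rule: finite_induct)
  case empty
  then show ?case by (intro Rep_zero) simp
next
  case (insert x I)
  have "Rep (\<lambda>c U l0 t. F x c U l0 t + (\<Sum>i\<in>I. F i c U l0 t)) d a"
    using insert by (intro Rep_add) auto
  then show ?case using insert by simp
qed

lemma Rep_l0: "Rep (\<lambda>c U l0 t. l0 t) 1 0"
  unfolding Rep_def by (intro exI[of _ Xp]) (simp add: degree_Xp)

lemma Rep_inv: "Rep (\<lambda>c U l0 t. 1 / (6 * l0 t ^ 2 + t)) 1 1"
  unfolding Rep_def
proof (intro exI[of _ Xp] conjI allI impI ballI)
  show "degree Xp \<le> 1" by (simp add: degree_Xp)
  fix c U l0 t assume b: "is_branch c U l0" and t: "t \<in> U"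
  note f = branch_facts[OF b t]
  then show "1 / (6 * l0 t ^ 2 + t) = eval2 Xp (l0 t) c / (4 * l0 t ^ 3 - c) ^ 1"
    unfolding power_one_right f(3)[symmetric] eval2_Xp using f(1) by simp
qed

lemma Rep_deriv_l0: "Rep (\<lambda>c U l0. deriv l0) 2 1"
  unfolding Rep_def
proof (intro exI[of _ "- (Xp ^ 2)"] conjI allI impI ballI)
  show "degree (- (Xp ^ 2)) \<le> 2" using degree_power_le[of Xp 2] by (simp add: degree_Xp)
  fix c U l0 t assume b: "is_branch c U l0" and t: "t \<in> U"
  note f = branch_facts[OF b t]
  show "deriv l0 t = eval2 (- (Xp ^ 2)) (l0 t) c / (4 * l0 t ^ 3 - c) ^ 1"
    using DERIV_imp_deriv[OF f(4)] by simp
qed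




definition qd :: "nat \<Rightarrow> complex poly poly \<Rightarrow> complex poly poly" where
  "qd a p = smult [:12 * of_nat a:] (Xp ^ 4 * p) - Xp ^ 2 * Dp * pderiv p"

lemma degree_qd: assumes "degree p \<le> d" shows "degree (qd a p) \<le> d + 4"
proof -
  have X4: "degree (Xp ^ 4) \<le> 4" using degree_power_le[of Xp 4] by (simp add: degree_Xp)
  have X2: "degree (Xp ^ 2) \<le> 2" using degree_power_le[of Xp 2] by (simp add: degree_Xp)
  have 1: "degree (smult [:12 * of_nat a:] (Xp ^ 4 * p)) \<le> d + 4"
    using degree_mult_le[of "Xp^4" p] X4 assms degree_smult_le[of "[:12 * of_nat a:]" "Xp ^ 4 * p"] by linarith
  have 2: "degree (Xp ^ 2 * Dp * pderiv p) \<le> d + 4"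
  proof (cases "degree p = 0")
    case True then have "pderiv p = 0" using pderiv_eq_0_iff by blast
    then show ?thesis by simp
  next
    case False
    have "degree (Xp ^ 2 * Dp * pderiv p) \<le> degree (Xp ^ 2 * Dp) + degree (pderiv p)" by (rule degree_mult_le)
    moreover have "degree (Xp ^ 2 * Dp) \<le> degree (Xp ^ 2) + degree Dp" by (rule degree_mult_le)
    moreover have "degree (pderiv p) = degree p - 1" by (rule degree_pderiv)
    ultimately show ?thesis using X2 degree_Dp assms False by linarith
  qed
  show ?thesis unfolding qd_def using 1 2 degree_diff_le by blast
qed

lemma G_DERIV:
  assumes b: "is_branch c U l0" and t: "t \<in> U"
  shows "((\<lambda>s. eval2 p (l0 s) c * inverse (4 * l0 s ^ 3 - c) ^ a) has_field_derivative
           eval2 (qd a p) (l0 t) c * inverse (4 * l0 t ^ 3 - c) ^ (a + 2)) (at t)"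
proof -
  note f = branch_facts[OF b t]
  define D where "D = 4 * l0 t ^ 3 - c"
  have D0: "D \<noteq> 0" using f(2) D_def by simp
  have hl: "(l0 has_field_derivative (- (l0 t ^ 2) / D)) (at t)" using f(4) D_def by simp
  have hinv: "((\<lambda>s. inverse (4 * l0 s ^ 3 - c)) has_field_derivative
      12 * l0 t ^ 4 * inverse D ^ 3) (at t)"
    unfolding D_def
    apply (rule derivative_eq_intros hl[unfolded D_def] refl)+
    using f(2) f(1) apply (simp_all add: field_simps power2_eq_square power3_eq_cube power4_eq_xxxx)
    done
  show ?thesis
  proof (induction a)
    case 0
    have "((\<lambda>s. eval2 p (l0 s) c) has_field_derivative eval2 (pderiv p) (l0 t) c * (- (l0 t ^ 2) / D)) (at t)"
      by (rule DERIV_chain2[OF eval2_DERIV hl])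
    moreover have "eval2 (pderiv p) (l0 t) c * (- (l0 t ^ 2) / D) = eval2 (qd 0 p) (l0 t) c * inverse D ^ 2"
      using D0 by (simp add: qd_def D_def[symmetric] field_simps power2_eq_square)
    ultimately show ?case by (simp add: D_def power2_eq_square)
  next
    case (Suc a)
    have "((\<lambda>s. eval2 p (l0 s) c * inverse (4 * l0 s ^ 3 - c) ^ Suc a) has_field_derivative
        eval2 (qd a p) (l0 t) c * inverse D ^ (a + 2) * inverse D
         + (eval2 p (l0 t) c * inverse D ^ a) * (12 * l0 t ^ 4 * inverse D ^ 3)) (at t)"
      using DERIV_mult[OF Suc.IH hinv] unfolding D_def by (simp add: algebra_simps)
    then have "((\<lambda>s. eval2 p (l0 s) c * inverse (4 * l0 s ^ 3 - c) ^ Suc a) has_field_derivative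
        eval2 (qd a p) (l0 t) c * inverse D ^ (a + 2) * inverse D
         + (eval2 p (l0 t) c * inverse D ^ a) * (12 * l0 t ^ 4 * inverse D ^ 3)) (at t)" .
    moreover have "eval2 (qd a p) (l0 t) c * inverse D ^ (a + 2) * inverse D
         + (eval2 p (l0 t) c * inverse D ^ a) * (12 * l0 t ^ 4 * inverse D ^ 3)
       = eval2 (qd (Suc a) p) (l0 t) c * inverse D ^ (Suc a + 2)"
      by (simp add: qd_def algebra_simps power_add power3_eq_cube)
    ultimately show ?case by (simp only: D_def)
  qed
qed




lemma Rep_deriv:
  assumes "Rep F d a"
  shows "Rep (\<lambda>c U l0. deriv (F c U l0)) (d + 4) (a + 2)"
proof -
  obtain p where p: "degree p \<le> d" "\<forall>c U l0. is_branch c U l0 \<longrightarrow> (\<forall>t\<in>U. F c U l0 t = eval2 p (l0 t) c / (4 * l0 t ^ 3 - c) ^ a)"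
    using assms(1) unfolding Rep_def by blast
  show ?thesis unfolding Rep_def
  proof (intro exI[of _ "qd a p"] conjI allI impI ballI)
    show "degree (qd a p) \<le> d + 4" using degree_qd p(1) .
    fix c U l0 t assume b: "is_branch c U l0" and t: "t \<in> U"
    have U: "open U" using b unfolding is_branch_def by blast
    have "(F c U l0 has_field_derivative eval2 (qd a p) (l0 t) c * inverse (4 * l0 t ^ 3 - c) ^ (a + 2)) (at t)"
    proof (rule has_field_derivative_transform_within_open[OF G_DERIV[OF b t] U t])
      fix s assume "s \<in> U"
      then show "eval2 p (l0 s) c * inverse (4 * l0 s ^ 3 - c) ^ a = F c U l0 s"
        using p b by (simp add: divide_inverse power_inverse)
    qed
    then show "deriv (F c U l0) t = eval2 (qd a p) (l0 t) c / (4 * l0 t ^ 3 - c) ^ (a + 2)"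
      by (simp add: DERIV_imp_deriv divide_inverse power_inverse)
  qed
qed

lemma zs_len: "length (zs_list l0 k) = Suc k"
  by (induction k) simp_all

lemma zs_nth: "i \<le> k \<Longrightarrow> zs_list l0 k ! i = zero_param_coeff l0 i"
proof (induction k)
  case 0 then show ?case by (simp add: zero_param_coeff_def)
next
  case (Suc k)
  show ?case
  proof (cases "i \<le> k")
    case True then show ?thesis using Suc by (simp add: nth_append zs_len)
  next
    case False then have "i = Suc k" using Suc by simp
    then show ?thesis by (simp add: zero_param_coeff_def)
  qed
qed

lemma zpc0: "zero_param_coeff l0 0 = l0" by (simp add: zero_param_coeff_def)

lemma zpc_Suc: "zero_param_coeff l0 (Suc k) = (\<lambda>t.
   ((if 2 \<le> Suc k then deriv (deriv (zero_param_coeff l0 (Suc k - 2))) t else 0)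
    - 2 * (\<Sum>k1\<le>Suc k. \<Sum>k2\<le>Suc k - k1.
        if k1 < Suc k \<and> k2 < Suc k \<and> Suc k - k1 - k2 < Suc k
        then zero_param_coeff l0 k1 t * zero_param_coeff l0 k2 t * zero_param_coeff l0 (Suc k - k1 - k2) t else 0))
   / (6 * l0 t ^ 2 + t))"
proof -
  have "zero_param_coeff l0 (Suc k) = zs_step (zs_list l0 k)"
    by (simp add: zero_param_coeff_def nth_append zs_len)
  also have "\<dots> = (\<lambda>t.
   ((if 2 \<le> Suc k then deriv (deriv (zero_param_coeff l0 (Suc k - 2))) t else 0)
    - 2 * (\<Sum>k1\<le>Suc k. \<Sum>k2\<le>Suc k - k1.
        if k1 < Suc k \<and> k2 < Suc k \<and> Suc k - k1 - k2 < Suc k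
        then zero_param_coeff l0 k1 t * zero_param_coeff l0 k2 t * zero_param_coeff l0 (Suc k - k1 - k2) t else 0))
   / (6 * l0 t ^ 2 + t))"
    unfolding zs_step_def Let_def zs_len
    by (intro ext) (simp add: zs_nth zpc0 cong: if_cong)
  finally show ?thesis .
qed




definition dd :: "nat \<Rightarrow> nat" where "dd m = (if m = 0 then 1 else 9 * m - 2)"
definition ee :: "nat \<Rightarrow> nat" where "ee m = (if m = 0 then 0 else 5 * m - 1)"

lemma Rep_eq: "Rep F d a \<Longrightarrow> d = d' \<Longrightarrow> a = a' \<Longrightarrow> Rep F d' a'" by simp

lemma deriv_zero_on:
  assumes "open U" "\<And>s. s \<in> U \<Longrightarrow> f s = 0" "t \<in> U"
  shows "deriv f t = 0"
proof -
  have "(f has_field_derivative 0) (at t)"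
    by (rule has_field_derivative_transform_within_open[OF DERIV_const assms(1,3)]) (simp add: assms(2))
  then show ?thesis by (rule DERIV_imp_deriv)
qed

lemma arith_aux:
  assumes "i + j + l = n" "i < n" "j < n" "l < n"
  shows "ee i + ee j + ee l \<le> 5 * n - 2"
    "dd i + dd j + dd l + 3 * (5 * n - 2 - (ee i + ee j + ee l)) \<le> 9 * n - 3"
  using assms unfolding dd_def ee_def by (auto split: if_splits)

lemma main_lemma:
  "(odd k \<longrightarrow> (\<forall>c U l0. is_branch c U l0 \<longrightarrow> (\<forall>t\<in>U. zero_param_coeff l0 k t = 0)))
   \<and> (even k \<longrightarrow> Rep (\<lambda>c U l0. zero_param_coeff l0 k) (dd (k div 2)) (ee (k div 2)))"
proof (induction k rule: less_induct)
  case (less k)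
  have IHo: "\<And>j c U l0 t. j < k \<Longrightarrow> odd j \<Longrightarrow> is_branch c U l0 \<Longrightarrow> t \<in> U \<Longrightarrow> zero_param_coeff l0 j t = 0"
    using less by blast
  have IHe: "\<And>j. j < k \<Longrightarrow> even j \<Longrightarrow> Rep (\<lambda>c U l0. zero_param_coeff l0 j) (dd (j div 2)) (ee (j div 2))"
    using less by blast
  show ?case
  proof (cases k)
    case 0 then show ?thesis using Rep_l0 by (simp add: zpc0 dd_def ee_def)
  next
    case (Suc k')
    define T where "T = (\<lambda>k1 k2 (c::complex) (U::complex set) (l0::complex\<Rightarrow>complex) (t::complex).
        if k1 < k \<and> k2 < k \<and> k - k1 - k2 < k
        then zero_param_coeff l0 k1 t * zero_param_coeff l0 k2 t * zero_param_coeff l0 (k - k1 - k2) t else (0::complex))"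
    have zk: "zero_param_coeff ll k t =
       ((if 2 \<le> k then deriv (deriv (zero_param_coeff ll (k - 2))) t else 0)
        - 2 * (\<Sum>k1\<le>k. \<Sum>k2\<le>k - k1. T k1 k2 c U ll t)) / (6 * ll t ^ 2 + t)" for ll c U t
      unfolding T_def Suc zpc_Suc by simp
    show ?thesis
    proof (cases "odd k")
      case True
      have "zero_param_coeff l0 k t = 0" if b: "is_branch c U l0" and t: "t \<in> U" for c U l0 t
      proof -
        have U: "open U" using b unfolding is_branch_def by blast
        have A: "(if 2 \<le> k then deriv (deriv (zero_param_coeff l0 (k - 2))) t else 0) = 0"
        proof (cases "2 \<le> k")
          case True
          have "\<And>s. s \<in> U \<Longrightarrow> zero_param_coeff l0 (k - 2) s = 0"
          proof -
            have "odd (k - 2)" using True \<open>odd k\<close> by presburger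
            then show "\<And>s. s \<in> U \<Longrightarrow> zero_param_coeff l0 (k - 2) s = 0"
              using IHo[of "k - 2"] True b by simp
          qed
          then have "\<And>s. s \<in> U \<Longrightarrow> deriv (zero_param_coeff l0 (k - 2)) s = 0"
            using deriv_zero_on[OF U] by blast
          then show ?thesis using deriv_zero_on[OF U _ t] True by simp
        qed simp
        have B: "T k1 k2 c U l0 t = 0" if "k2 \<le> k - k1" for k1 k2
        proof (cases "k1 < k \<and> k2 < k \<and> k - k1 - k2 < k")
          case True
          have "k1 + k2 + (k - k1 - k2) = k" using that True by arith
          then have "odd k1 \<or> odd k2 \<or> odd (k - k1 - k2)" using \<open>odd k\<close> by (metis even_add)
          then show ?thesis
          proof (elim disjE)
            assume "odd k1" then show ?thesis using True IHo[of k1] b t unfolding T_def by simp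
          next
            assume "odd k2" then show ?thesis using True IHo[of k2] b t unfolding T_def by simp
          next
            assume "odd (k - k1 - k2)" then show ?thesis using True IHo[of "k - k1 - k2"] b t unfolding T_def by simp
          qed
        qed (auto simp: T_def)
        show ?thesis unfolding zk[where ll=l0 and c=c and U=U and t=t] using A B by simp
      qed
      then show ?thesis using True by blast
    next
      case False
      then obtain n where kn: "k = 2 * n" by (auto elim: evenE)
      have n1: "n \<ge> 1" using kn Suc by simp
      have RA: "Rep (\<lambda>c U l0 t. if 2 \<le> k then deriv (deriv (zero_param_coeff l0 (k - 2))) t else 0)
                 (9 * n - 3) (5 * n - 2)"
      proof (cases "n = 1")
        case True
        have "Rep (\<lambda>c U l0. deriv (deriv l0)) (9 * n - 3) (5 * n - 2)"
          by (rule Rep_eq[OF Rep_deriv[OF Rep_deriv_l0]]) (use True in simp)+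
        then show ?thesis by (rule Rep_cong) (use True kn in \<open>simp add: zpc0\<close>)
      next
        case False
        have "Rep (\<lambda>c U l0. zero_param_coeff l0 (k - 2)) (dd ((k - 2) div 2)) (ee ((k - 2) div 2))"
          using IHe[of "k - 2"] kn n1 by simp
        moreover have "(k - 2) div 2 = n - 1" using kn by simp
        ultimately have "Rep (\<lambda>c U l0. zero_param_coeff l0 (k - 2)) (9 * (n - 1) - 2) (5 * (n - 1) - 1)"
          using False n1 by (simp add: dd_def ee_def)
        then have R2: "Rep (\<lambda>c U l0. deriv (deriv (zero_param_coeff l0 (k - 2)))) (9 * (n - 1) - 2 + 4 + 4) (5 * (n - 1) - 1 + 2 + 2)"
          using Rep_deriv[OF Rep_deriv] by blast
        have "Rep (\<lambda>c U l0. deriv (deriv (zero_param_coeff l0 (k - 2)))) (9 * n - 3) (5 * n - 2)"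
          by (rule Rep_eq[OF R2]) (use False n1 in arith)+
        then show ?thesis by (rule Rep_cong) (use kn n1 in simp)
      qed
      have RT: "Rep (T k1 k2) (9 * n - 3) (5 * n - 2)" if "k2 \<le> k - k1" for k1 k2
      proof (cases "k1 < k \<and> k2 < k \<and> k - k1 - k2 < k")
        case cond: True
        define k3 where "k3 = k - k1 - k2"
        have sum: "k1 + k2 + k3 = k" unfolding k3_def using that cond by arith
        show ?thesis
        proof (cases "odd k1 \<or> odd k2 \<or> odd k3")
          case True
          show ?thesis
          proof (rule Rep_zero)
            fix c U l0 t assume b: "is_branch c U l0" and t: "t \<in> U"
            from True show "T k1 k2 c U l0 t = 0"
            proof (elim disjE)
              assume "odd k1" then show ?thesis using cond IHo[of k1] b t unfolding T_def by simp
            next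
              assume "odd k2" then show ?thesis using cond IHo[of k2] b t unfolding T_def by simp
            next
              assume "odd k3" then show ?thesis using cond IHo[of k3] b t unfolding T_def k3_def by simp
            qed
          qed
        next
          case False
          then have ev: "even k1" "even k2" "even k3" by auto
          have "Rep (\<lambda>c U l0 t. zero_param_coeff l0 k1 t * zero_param_coeff l0 k2 t * zero_param_coeff l0 k3 t)
             (dd (k1 div 2) + dd (k2 div 2) + dd (k3 div 2)) (ee (k1 div 2) + ee (k2 div 2) + ee (k3 div 2))"
            using Rep_mult[OF Rep_mult[OF IHe[of k1] IHe[of k2]] IHe[of k3]] ev cond k3_def by simp
          moreover have ar: "k1 div 2 + k2 div 2 + k3 div 2 = n" "k1 div 2 < n" "k2 div 2 < n" "k3 div 2 < n"
            using sum ev kn cond k3_def by (auto elim!: evenE)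
          note aa = arith_aux[OF ar]
          ultimately have "Rep (\<lambda>c U l0 t. zero_param_coeff l0 k1 t * zero_param_coeff l0 k2 t * zero_param_coeff l0 k3 t)
             (9 * n - 3) (5 * n - 2)"
            by (intro Rep_mono[OF _ aa(1)]) (use aa(2) in simp_all)
          then show ?thesis
            by (rule Rep_cong) (use cond in \<open>simp add: T_def k3_def\<close>)
        qed
      qed (intro Rep_zero, auto simp: T_def)
      have RS: "Rep (\<lambda>c U l0 t. \<Sum>k1\<le>k. \<Sum>k2\<le>k - k1. T k1 k2 c U l0 t) (9 * n - 3) (5 * n - 2)"
        by (intro Rep_sum finite_atMost RT) simp
      have RN: "Rep (\<lambda>c U l0 t. (if 2 \<le> k then deriv (deriv (zero_param_coeff l0 (k - 2))) t else 0)
        - 2 * (\<Sum>k1\<le>k. \<Sum>k2\<le>k - k1. T k1 k2 c U l0 t)) (9 * n - 3) (5 * n - 2)"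
        by (intro Rep_diff RA Rep_cmult RS)
      have "Rep (\<lambda>c U l0 t. ((if 2 \<le> k then deriv (deriv (zero_param_coeff l0 (k - 2))) t else 0)
        - 2 * (\<Sum>k1\<le>k. \<Sum>k2\<le>k - k1. T k1 k2 c U l0 t)) * (1 / (6 * l0 t ^ 2 + t))) (9 * n - 3 + 1) (5 * n - 2 + 1)"
        by (rule Rep_mult[OF RN Rep_inv])
      moreover have "9 * n - 3 + 1 = dd (k div 2)" "5 * n - 2 + 1 = ee (k div 2)"
        using kn n1 by (auto simp: dd_def ee_def)
      ultimately have "Rep (\<lambda>c U l0 t. ((if 2 \<le> k then deriv (deriv (zero_param_coeff l0 (k - 2))) t else 0)
        - 2 * (\<Sum>k1\<le>k. \<Sum>k2\<le>k - k1. T k1 k2 c U l0 t)) * (1 / (6 * l0 t ^ 2 + t))) (dd (k div 2)) (ee (k div 2))"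
        by simp
      then have "Rep (\<lambda>c U l0. zero_param_coeff l0 k) (dd (k div 2)) (ee (k div 2))"
      proof (rule Rep_cong)
        fix c U l0 t
        show "zero_param_coeff l0 k t = ((if 2 \<le> k then deriv (deriv (zero_param_coeff l0 (k - 2))) t else 0)
        - 2 * (\<Sum>k1\<le>k. \<Sum>k2\<le>k - k1. T k1 k2 c U l0 t)) * (1 / (6 * l0 t ^ 2 + t))"
          using zk[where ll=l0 and c=c and U=U and t=t] by simp
      qed
      then show ?thesis using False by simp
    qed
  qed
qed


theorem mainTheorem3:
  fixes n :: nat
  assumes "n \<ge> 1"
  shows "(\<forall>c U l0. is_branch c U l0 \<longrightarrow>
            (\<forall>t\<in>U. zero_param_coeff l0 (2 * n - 1) t = 0))
       \<and> (\<exists>p :: complex poly poly. degree p \<le> 9 * n - 2 \<and>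
            (\<forall>c U l0. is_branch c U l0 \<longrightarrow>
               (\<forall>t\<in>U. zero_param_coeff l0 (2 * n) t
                        = eval2 p (l0 t) c / (4 * l0 t ^ 3 - c) ^ (5 * n - 1))))"
proof
  have "odd (2 * n - 1)" using assms by presburger
  then show "\<forall>c U l0. is_branch c U l0 \<longrightarrow> (\<forall>t\<in>U. zero_param_coeff l0 (2 * n - 1) t = 0)"
    using main_lemma[of "2 * n - 1"] by blast
next
  have "Rep (\<lambda>c U l0. zero_param_coeff l0 (2 * n)) (dd n) (ee n)"
    using main_lemma[of "2 * n"] by simp
  moreover have "dd n = 9 * n - 2" "ee n = 5 * n - 1" using assms by (auto simp: dd_def ee_def)
  ultimately show "\<exists>p :: complex poly poly. degree p \<le> 9 * n - 2 \<and>
            (\<forall>c U l0. is_branch c U l0 \<longrightarrow>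
               (\<forall>t\<in>U. zero_param_coeff l0 (2 * n) t
                        = eval2 p (l0 t) c / (4 * l0 t ^ 3 - c) ^ (5 * n - 1)))"
    unfolding Rep_def by simp
qed

end
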